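(* Let $\alpha=[a_1,a_2,\dots]\in(0,1)$ be irrational and suppose there is $C\in\mathbb{R}$ with $|a_n|\le C$ for all $n\in\mathbb{N}$. Then for every nonnegative subadditive function $F:W_\alpha\to\mathbb{R}$ the limit $\lim_{|w|\to\infty,\,w\in W_\alpha}\frac{F(w)}{|w|}$ exists.
   Context: $\alpha=[a_1,a_2,\dots]$ denotes the continued fraction expansion $\alpha=1/(a_1+1/(a_2+\cdots))$. For $\theta\in[0,1)$, $v_{\alpha,\theta}$ is the two-sided infinite word over $\{0,1\}$ with letters $v_{\alpha,\theta}(n)=\chi_{[1-\alpha,1)}(n\alpha+\theta\bmod1)$; $W_\alpha$ is the set of all finite non-empty subwords of the words $v_{\alpha,\theta}$, $\theta\in[0,1)$, and $|w|$ is the length of $w$. A function $F:W_\alpha\to\mathbb{R}$ is subadditive if $F(ab)\le F(a)+F(b)$ for all $a,b\in W_\alpha$ with $ab\in W_\alpha$. The statement $\lim_{|w|\to\infty,\,w\in W_\alpha}G(w)=a$ means: for every $\epsilon>0$ there is $n_\epsilon$ with $|G(w)-a|\le\epsilon$ for all $w\in W_\alpha$ with $|w|\ge n_\epsilon$; the limit exists if this holds for some real $a$. *)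

theory Defs
  imports "HOL-Analysis.Analysis"
begin

fun gauss_iter :: "real \<Rightarrow> nat \<Rightarrow> real" where
  "gauss_iter x 0 = x"
| "gauss_iter x (Suc n) = frac (1 / gauss_iter x n)"

text \<open>Partial quotients a_1, a_2, ... of alpha = [a_1, a_2, ...] = 1/(a_1 + 1/(a_2 + ...)),
  indexed from 1: cf_digit alpha n = a_n for n >= 1.\<close>
definition cf_digit :: "real \<Rightarrow> nat \<Rightarrow> int" where
  "cf_digit x n = \<lfloor>1 / gauss_iter x (n - 1)\<rfloor>"

definition sturm :: "real \<Rightarrow> real \<Rightarrow> int \<Rightarrow> nat" where
  "sturm \<alpha> \<theta> n = (if frac (of_int n * \<alpha> + \<theta>) \<in> {1 - \<alpha>..<1} then 1 else 0)"

definition sturm_words :: "real \<Rightarrow> nat list set" where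
  "sturm_words \<alpha> = {w. w \<noteq> [] \<and> (\<exists>\<theta> \<in> {0..<1}. \<exists>k::int.
        w = map (\<lambda>i. sturm \<alpha> \<theta> (k + int i)) [0..<length w])}"

definition subadditive_on :: "nat list set \<Rightarrow> (nat list \<Rightarrow> real) \<Rightarrow> bool" where
  "subadditive_on W F \<longleftrightarrow>
     (\<forall>a\<in>W. \<forall>b\<in>W. a @ b \<in> W \<longrightarrow> F (a @ b) \<le> F a + F b)"

definition word_limit :: "nat list set \<Rightarrow> (nat list \<Rightarrow> real) \<Rightarrow> real \<Rightarrow> bool" where
  "word_limit W G L \<longleftrightarrow>
     (\<forall>\<epsilon>>0. \<exists>n\<^sub>\<epsilon>. \<forall>w\<in>W. length w \<ge> n\<^sub>\<epsilon> \<longrightarrow> \<bar>G w - L\<bar> \<le> \<epsilon>)"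

end

theory Submission
  imports Defs "HOL-Analysis.Kronecker_Approximation_Theorem"
begin


lemma gauss_props:
  assumes "0 < x" "x < 1" "x \<notin> \<rat>"
  shows "0 < gauss_iter x n \<and> gauss_iter x n < 1 \<and> gauss_iter x n \<notin> \<rat>"
proof (induction n)
  case 0 then show ?case using assms by simp
next
  case (Suc n)
  let ?y = "gauss_iter x n"
  have r: "1/?y \<notin> \<rat>"
  proof
    assume "1/?y \<in> \<rat>"
    then have "1/(1/?y) \<in> \<rat>" by (rule Rats_divide[OF Rats_1])
    then show False using Suc by simp
  qed
  have "frac (1/?y) \<noteq> 0" using r frac_eq_0_iff Ints_subset_Rats by blast
  moreover have "frac (1/?y) \<notin> \<rat>"
  proof
    assume "frac (1/?y) \<in> \<rat>"
    then have "frac (1/?y) + of_int \<lfloor>1/?y\<rfloor> \<in> \<rat>" by (simp add: Rats_add)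
    then show False using r by (simp add: frac_def)
  qed
  ultimately show ?case by (simp add: frac_lt_1 frac_ge_0 order_le_neq_trans)
qed

lemma gauss_step:
  fixes n :: nat and C :: real
  assumes "0 < \<alpha>" "\<alpha> < 1" "\<alpha> \<notin> \<rat>" "\<forall>n\<ge>1. \<bar>cf_digit \<alpha> n\<bar> \<le> C"
  defines "x \<equiv> gauss_iter \<alpha> n" and "y \<equiv> gauss_iter \<alpha> (Suc n)" and "a \<equiv> \<lfloor>1/gauss_iter \<alpha> n\<rfloor>"
  shows "1 \<le> a" "of_int a \<le> C" "y = 1/x - a" "x = 1/(a+y)" "1/(C+1) < x" "1/(C+1) < y" "0 < x" "x < 1"
     "0 < y" "y < 1" "1 \<le> C"
proof -
  have x: "0 < x" "x < 1" using gauss_props[OF assms(1-3), of n] x_def by (simp_all del: gauss_iter.simps)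
  have y: "0 < y" "y < 1" using gauss_props[OF assms(1-3), of "Suc n"] y_def by (simp_all del: gauss_iter.simps)
  show "0 < x" "x < 1" "0 < y" "y < 1" using x y by auto
  have "1 < 1/x" using x by simp
  then show a1: "1 \<le> a" unfolding a_def x_def[symmetric] by (simp add: le_floor_iff)
  have "a = cf_digit \<alpha> (Suc n)" unfolding a_def cf_digit_def by simp
  moreover have "\<bar>cf_digit \<alpha> (Suc n)\<bar> \<le> C" using assms(4) by simp
  ultimately show aC: "of_int a \<le> C" by linarith
  then show C1: "1 \<le> C" using a1 by linarith
  show ye: "y = 1/x - a" unfolding y_def x_def a_def by (simp add: frac_def)
  then show "x = 1/(a+y)" using x by simp
  have "\<lfloor>1/x\<rfloor> \<le> C" using aC a_def x_def by simp
  then have "1/x < C+1" by linarith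
  then have "1 < (C+1) * x" using x by (simp add: field_simps)
  then show "1/(C+1) < x" using C1 by (simp add: field_simps)
  have "\<bar>cf_digit \<alpha> (Suc (Suc n))\<bar> \<le> C" using assms(4) by simp
  then have "cf_digit \<alpha> (Suc (Suc n)) \<le> C" by linarith
  then have "\<lfloor>1/y\<rfloor> \<le> C" unfolding cf_digit_def y_def by simp
  then have "1/y < C+1" by linarith
  then have "1 < (C+1) * y" using y by (simp add: field_simps)
  then show "1/(C+1) < y" using C1 by (simp add: field_simps)
qed


lemma badly_aux:
  fixes C :: real and q :: nat
  assumes A: "0 < \<alpha>" "\<alpha> < 1" "\<alpha> \<notin> \<rat>" "\<forall>n\<ge>1. \<bar>cf_digit \<alpha> n\<bar> \<le> C"
  shows "\<forall>n \<beta> p. 0 \<le> \<beta> \<longrightarrow> \<beta> \<le> 1 \<longrightarrow> 1 \<le> q \<longrightarrow> 0 \<le> p \<longrightarrow>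
     (1 + gauss_iter \<alpha> n * \<beta>) / (2*(C+1)^2) \<le> \<bar>(real q * gauss_iter \<alpha> n - of_int p) * (real q + of_int p * \<beta>)\<bar>"
proof (induction q rule: less_induct)
  case (less q)
  show ?case
  proof (intro allI impI)
    fix n :: nat and \<beta> :: real and p :: int
    assume b0: "0 \<le> \<beta>" and b1: "\<beta> \<le> 1" and q1: "1 \<le> q" and p0: "0 \<le> p"
    define x where "x = gauss_iter \<alpha> n"
    define y where "y = gauss_iter \<alpha> (Suc n)"
    define a where "a = \<lfloor>1/gauss_iter \<alpha> n\<rfloor>"
    have G: "1 \<le> a" "of_int a \<le> C" "y = 1/x - a" "x = 1/(a+y)" "1/(C+1) < x" "1/(C+1) < y" "0 < x" "x < 1"
     "0 < y" "y < 1" "1 \<le> C" unfolding x_def y_def a_def by (rule gauss_step[OF A])+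
    define K where "K = (C+1)^2"
    have K0: "0 < K" using G(11) unfolding K_def by simp
    have xy: "1/K < x*y"
    proof -
      have "1/K = (1/(C+1)) * (1/(C+1))" unfolding K_def by (simp add: power2_eq_square)
      also have "\<dots> < x * y" using G(5,6) G(11) G(7) by (intro mult_strict_mono) auto
      finally show ?thesis .
    qed
    have xK: "1/K \<le> x"
    proof -
      have "x*y \<le> x" using G(7) G(10) by (intro mult_left_le) auto
      then show ?thesis using xy by linarith
    qed
    have R: "(1 + x * \<beta>) / (2*K) \<le> 1/K"
    proof -
      have "x * \<beta> \<le> 1" using G(7,8) b0 b1 by (simp add: mult_le_one)
      then show ?thesis using K0 by (simp add: field_simps)
    qed
    have xa: "x * (a + y) = 1" using G(4) G(7) G(9) G(1)
      by (metis G(3) G(7) add_diff_cancel_left' add_diff_eq diff_add_cancel less_irrefl nonzero_mult_div_cancel_left times_divide_eq_right mult_1_right divide_self_if)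
    have main: "1/K \<le> \<bar>(real q * x - of_int p) * (real q + of_int p * \<beta>)\<bar> \<or>
       (1 + x * \<beta>) / (2*K) \<le> \<bar>(real q * x - of_int p) * (real q + of_int p * \<beta>)\<bar>"
    proof (cases "p = 0")
      case True
      have "x \<le> real q * x * real q" using q1 G(7)
        by (metis mult.commute mult_le_cancel_right1 mult_right_mono of_nat_0_le_iff of_nat_1 of_nat_mono order_trans less_le)
      moreover have "\<bar>(real q * x - of_int p) * (real q + of_int p * \<beta>)\<bar> = real q * x * real q"
        using True G(7) by (simp add: abs_mult)
      ultimately show ?thesis using xK by linarith
    next
      case pn0: False
      show ?thesis
      proof (cases "q \<le> p")
        case True
        have "real q \<le> of_int p" using True by (metis of_int_le_iff of_int_of_nat_eq)
        then have "real q * (1 - x) \<le> of_int p - real q * x" by (simp add: algebra_simps)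
        moreover have "x * y \<le> 1 - x"
        proof -
          have "1 - x = x * (a + y) - x" using xa by simp
          also have "\<dots> = x * y + x * (a - 1)" by (simp add: algebra_simps)
          finally show ?thesis using G(1) G(7) by simp
        qed
        moreover have "1 - x \<le> real q * (1 - x)" using q1 G(8) by simp
        moreover have "1 \<le> real q + of_int p * \<beta>"
        proof -
          have "0 \<le> of_int p * \<beta>" using p0 b0 by simp
          moreover have "1 \<le> real q" using q1 by simp
          ultimately show ?thesis by linarith
        qed
        ultimately have "x * y \<le> \<bar>(real q * x - of_int p)\<bar> * \<bar>real q + of_int p * \<beta>\<bar>"
          by (smt (verit, ccfv_SIG) mult_cancel_left1 mult_left_mono)
        then show ?thesis using xy by (simp add: abs_mult)
      next
        case qp: False
        show ?thesis
        proof (cases "real q < of_int a * of_int p")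
          case True
          have "real q * x < of_int a * of_int p * x" using True G(7) by simp
          then have "of_int p * (x * y) < of_int p - real q * x"
          proof -
            have "of_int p * (x*y) + of_int a * of_int p * x = of_int p * (x * (a+y))" by (simp add: algebra_simps)
            then have "of_int p * (x*y) = of_int p - of_int a * of_int p * x" using xa by simp
            then show ?thesis using \<open>real q * x < of_int a * of_int p * x\<close> by linarith
          qed
          moreover have "x * y \<le> of_int p * (x*y)" using pn0 p0 G(7,9) by simp
          moreover have "1 \<le> real q + of_int p * \<beta>"
        proof -
          have "0 \<le> of_int p * \<beta>" using p0 b0 by simp
          moreover have "1 \<le> real q" using q1 by simp
          ultimately show ?thesis by linarith
        qed
          ultimately have "x * y \<le> \<bar>(real q * x - of_int p)\<bar> * \<bar>real q + of_int p * \<beta>\<bar>"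
            by (smt (verit, ccfv_SIG) mult_cancel_left1 mult_left_mono)
          then show ?thesis using xy by (simp add: abs_mult)
        next
          case False
          define q' where "q' = int q - a * p"
          define \<beta>' where "\<beta>' = 1 / (a + \<beta>)"
          have a1r: "(1::real) \<le> of_int a" using G(1) by simp
          have ab: "1 \<le> a + \<beta>" using a1r b0 by linarith
          have "real_of_int (a*p) \<le> real_of_int (int q)" using False by simp
          then have "a*p \<le> int q" by (simp only: of_int_le_iff)
          then have q'0: "0 \<le> q'" unfolding q'_def by linarith
          have b'0a: "0 \<le> \<beta>'" unfolding \<beta>'_def using ab by simp
          have b'0b: "\<beta>' \<le> 1" unfolding \<beta>'_def using ab by (simp add: divide_le_eq)
          note b'0 = b'0a b'0b
          have pq: "nat p < q" using qp p0 by linarith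
          have IH: "(1 + y * \<beta>') / (2*(C+1)^2) \<le> \<bar>(real (nat p) * y - of_int q') * (real (nat p) + of_int q' * \<beta>')\<bar>"
            using less.IH[OF pq, THEN spec[of _ "Suc n"], THEN spec[of _ \<beta>'], THEN spec[of _ q']] b'0 q'0 pn0 p0 unfolding y_def by simp
          have e1: "real q * x - of_int p = x * (of_int q' - of_int p * y)"
          proof -
            have "x * (of_int q' - of_int p * y) = x * real q - of_int p * (x * (a+y))"
              unfolding q'_def by (simp add: algebra_simps)
            then show ?thesis using xa by simp
          qed
          have e2: "real q + of_int p * \<beta> = (a + \<beta>) * (of_int p + of_int q' * \<beta>')"
            unfolding \<beta>'_def q'_def using ab by (simp add: field_simps)
          have "\<bar>(real q * x - of_int p) * (real q + of_int p * \<beta>)\<bar> =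
              (x * (a+\<beta>)) * \<bar>(real (nat p) * y - of_int q') * (real (nat p) + of_int q' * \<beta>')\<bar>"
          proof -
            have np: "real (nat p) = of_int p" using p0 by simp
            have "(x * (of_int q' - of_int p * y)) * ((a + \<beta>) * (of_int p + of_int q' * \<beta>')) =
               (x * (a+\<beta>)) * (- ((of_int p * y - of_int q') * (of_int p + of_int q' * \<beta>')))"
              by (simp add: algebra_simps)
            moreover have ax: "\<bar>x\<bar> = x" using G(7) by simp
            moreover have aab: "\<bar>of_int a + \<beta>\<bar> = of_int a + \<beta>" using ab by simp
            ultimately show ?thesis unfolding e1 e2 np by (simp only: abs_mult abs_minus_cancel)
          qed
          also have "\<dots> \<ge> (x * (a+\<beta>)) * ((1 + y * \<beta>') / (2*(C+1)^2))"
            using IH G(7) ab by (intro mult_left_mono) auto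
          finally have "(x * (a+\<beta>)) * ((1 + y * \<beta>') / (2*(C+1)^2)) \<le> \<bar>(real q * x - of_int p) * (real q + of_int p * \<beta>)\<bar>" .
          moreover have "(x * (a+\<beta>)) * (1 + y * \<beta>') = 1 + x * \<beta>"
          proof -
            have "(x * (a+\<beta>)) * (1 + y * \<beta>') = x * (a + \<beta>) + x * y" unfolding \<beta>'_def using ab by (simp add: field_simps)
            also have "\<dots> = x * (a+y) + x * \<beta>" by (simp add: algebra_simps)
            finally show ?thesis using xa by simp
          qed
          ultimately show ?thesis unfolding K_def by (simp add: mult.assoc[symmetric])
        qed
      qed
    qed
    then show "(1 + gauss_iter \<alpha> n * \<beta>) / (2*(C+1)^2) \<le> \<bar>(real q * gauss_iter \<alpha> n - of_int p) * (real q + of_int p * \<beta>)\<bar>"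
      using R unfolding x_def[symmetric] K_def by auto
  qed
qed



lemma lin1: "(X::real) \<le> Y/2 \<Longrightarrow> 4*Z < Y \<Longrightarrow> 0 \<le> Y \<Longrightarrow> W + X + Z \<le> W + Y" by linarith

lemma abstract_ergodic:
  fixes f :: "'z \<Rightarrow> nat \<Rightarrow> real" and \<sigma> :: "'z \<Rightarrow> nat \<Rightarrow> 'z" and B :: real and K :: nat
  assumes P1a: "\<And>z n. 0 \<le> f z n" and P1b: "\<And>z n. f z n \<le> B * real n"
    and P2: "\<And>z n1 n2. f z (n1+n2) \<le> f z n1 + f (\<sigma> z n1) n2"
    and P3: "\<And>z z0 n. 1 \<le> n \<Longrightarrow> \<exists>j. j + n \<le> K * n \<and> f (\<sigma> z j) n = f z0 n"
  shows "\<exists>a. \<forall>\<epsilon>>0. \<exists>N0. \<forall>z n. N0 \<le> n \<longrightarrow> \<bar>f z n / real n - a\<bar> \<le> \<epsilon>"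
proof -
  define M where "M n = (SUP z. f z n)" for n
  have bdd: "bdd_above (range (\<lambda>z. f z n))" for n using P1b by (intro bdd_aboveI[of _ "B * real n"]) auto
  have fM: "f z n \<le> M n" for z n unfolding M_def using cSUP_upper[OF UNIV_I bdd] .
  have M0: "0 \<le> M n" for n using fM P1a order_trans by blast
  have MB: "M n \<le> B * real n" for n unfolding M_def by (rule cSUP_least) (auto simp: P1b)
  have Msub: "M (n1+n2) \<le> M n1 + M n2" for n1 n2
    unfolding M_def[of "n1+n2"]
  proof (rule cSUP_least)
    fix z show "f z (n1+n2) \<le> M n1 + M n2" using P2[of z n1 n2] fM[of z n1] fM[of "\<sigma> z n1" n2] by linarith
  qed auto
  obtain z00 :: 'z where True by blast
  have B0: "0 \<le> B" using P1a[of z00 1] P1b[of z00 1] by simp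
  define S where "S = (\<lambda>n. M n / real n) ` {1..}"
  define a where "a = Inf S"
  have Sne: "S \<noteq> {}" unfolding S_def by auto
  have Sbdd: "bdd_below S" unfolding S_def using M0 by (auto intro!: bdd_belowI[of _ 0])
  have aS: "a \<le> M n / real n" if "1 \<le> n" for n unfolding a_def
    by (rule cInf_lower[OF _ Sbdd]) (use that in \<open>auto simp: S_def\<close>)
  have a0: "0 \<le> a" unfolding a_def
    by (rule cInf_greatest[OF Sne]) (auto simp: S_def M0)
  have fek: "\<exists>n1\<ge>1. \<forall>m. M m \<le> (a+\<delta>) * real m + real n1 * B" if d0: "0 < \<delta>" for \<delta>
  proof -
    have "Inf S < a + \<delta>" using d0 a_def by simp
    then obtain s where "s \<in> S" "s < a + \<delta>" using cInf_less_iff[OF Sne Sbdd] by blast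
    then obtain n1 where n1: "1 \<le> n1" "M n1 / real n1 < a + \<delta>" unfolding S_def by auto
    then have Mn1: "M n1 \<le> (a+\<delta>) * real n1" by (simp add: divide_less_eq less_imp_le)
    have "M m \<le> (a+\<delta>) * real m + real n1 * B" for m
    proof (induction m rule: less_induct)
      case (less m)
      show ?case
      proof (cases "m < n1")
        case True
        have "M m \<le> B * real m" by (rule MB)
        also have "\<dots> \<le> real n1 * B" using True B0 by (simp add: mult.commute mult_left_mono)
        also have "\<dots> \<le> (a+\<delta>) * real m + real n1 * B" using a0 d0 by simp
        finally show ?thesis .
      next
        case False
        then have mm: "m = n1 + (m - n1)" by simp
        have "M m \<le> M n1 + M (m - n1)" using Msub[of n1 "m - n1"] mm by simp
        also have "\<dots> \<le> (a+\<delta>) * real n1 + ((a+\<delta>) * real (m - n1) + real n1 * B)"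
          using Mn1 less.IH[of "m - n1"] n1(1) False by simp
        also have "\<dots> = (a+\<delta>) * real m + real n1 * B" using False by (simp add: algebra_simps of_nat_diff)
        finally show ?thesis .
      qed
    qed
    then show ?thesis using n1 by blast
  qed
  have K1: "1 \<le> K" using P3[of 1 z00 z00] by auto
  show ?thesis
  proof (rule exI[of _ a], intro allI impI)
    fix \<epsilon> :: real assume e0: "0 < \<epsilon>"
    define \<delta> where "\<delta> = \<epsilon> / (2 * real K)"
    have d0: "0 < \<delta>" using e0 K1 by (simp add: \<delta>_def)
    have dK: "\<delta> * real K = \<epsilon> / 2" using K1 by (simp add: \<delta>_def)
    have de: "\<delta> \<le> \<epsilon>/2" using K1 e0 by (simp add: \<delta>_def field_simps)
    obtain n1 where n1: "1 \<le> n1" "\<And>m. M m \<le> (a+\<delta>) * real m + real n1 * B" using fek[OF d0] by blast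
    define N0 where "N0 = nat \<lceil>4 * real n1 * B / \<epsilon>\<rceil> + 1"
    show "\<exists>N0. \<forall>z n. N0 \<le> n \<longrightarrow> \<bar>f z n / real n - a\<bar> \<le> \<epsilon>"
    proof (rule exI[of _ N0], intro allI impI)
      fix z n assume nN: "N0 \<le> n"
      have n1': "1 \<le> n" using nN N0_def by simp
      have nbig: "4 * real n1 * B / \<epsilon> < real n" using nN unfolding N0_def by linarith
      then have nbig': "4 * real n1 * B < \<epsilon> * real n" using e0 by (simp add: divide_less_eq mult.commute)
      have npos: "0 < real n" using n1' by simp
      have up: "f z n \<le> (a + \<epsilon>) * real n"
      proof -
        have "f z n \<le> (a+\<delta>) * real n + real n1 * B" using fM[of z n] n1(2)[of n] by linarith
        also have "\<dots> \<le> (a + \<epsilon>) * real n"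
        proof -
          have "\<delta> * real n \<le> \<epsilon>/2 * real n" using de npos by (intro mult_right_mono) auto
          moreover have "(a+\<delta>) * real n = a * real n + \<delta> * real n" by (simp add: algebra_simps)
          moreover have "(a+\<epsilon>) * real n = a * real n + \<epsilon> * real n" by (simp add: algebra_simps)
          moreover have "\<epsilon>/2 * real n = (\<epsilon> * real n)/2" by simp
          moreover have "4 * real n1 * B = 4 * (real n1 * B)" by simp
          ultimately show ?thesis using nbig' lin1[of "\<delta> * real n" "\<epsilon> * real n" "real n1 * B" "a * real n"] e0 npos by simp
        qed
        finally show ?thesis .
      qed
      have low: "(a - \<epsilon>) * real n \<le> f z n"
      proof (rule ccontr)
        assume "\<not> (a - \<epsilon>) * real n \<le> f z n"
        then have fz: "f z n < (a - \<epsilon>) * real n" by simp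
        have "M (K * n) \<le> (a+\<delta>) * (real (K*n) - real n) + (a - \<epsilon>) * real n + 2 * real n1 * B"
          unfolding M_def
        proof (rule cSUP_least)
          fix z'
          obtain j where j: "j + n \<le> K * n" "f (\<sigma> z' j) n = f z n" using P3[OF n1'] by blast
          define r where "r = K * n - j - n"
          have Kn: "K * n = j + (n + r)" using j unfolding r_def by simp
          have "f z' (K*n) \<le> f z' j + f (\<sigma> z' j) (n + r)" using P2[of z' j "n+r"] Kn by simp
          also have "\<dots> \<le> f z' j + (f (\<sigma> z' j) n + f (\<sigma> (\<sigma> z' j) n) r)" using P2 by simp
          also have "\<dots> \<le> M j + (f z n + M r)" using fM j(2) by (simp add: add_mono)
          also have "\<dots> \<le> ((a+\<delta>) * real j + real n1 * B) + ((a - \<epsilon>) * real n + ((a+\<delta>) * real r + real n1 * B))"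
            using n1(2)[of j] n1(2)[of r] fz by linarith
          also have "\<dots> = (a+\<delta>) * (real j + real r) + (a - \<epsilon>) * real n + 2 * real n1 * B"
            by (simp add: algebra_simps)
          also have "real j + real r = real (K*n) - real n" using Kn by (simp add: of_nat_diff)
          finally show "f z' (K*n) \<le> (a+\<delta>) * (real (K*n) - real n) + (a - \<epsilon>) * real n + 2 * real n1 * B" .
        qed auto
        moreover have "a * real (K*n) \<le> M (K*n)"
        proof -
          have "1 \<le> K * n" using K1 n1' by simp
          then have "a \<le> M (K*n) / real (K*n)" using aS by blast
          then show ?thesis using \<open>1 \<le> K * n\<close> by (simp add: le_divide_eq)
        qed
        ultimately have "a * real (K*n) \<le> (a+\<delta>) * (real (K*n) - real n) + (a - \<epsilon>) * real n + 2 * real n1 * B"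
          by linarith
        then have "0 \<le> \<delta> * real (K*n) - \<delta> * real n - \<epsilon> * real n + 2 * real n1 * B"
          by (simp add: algebra_simps)
        moreover have "\<delta> * real (K*n) = \<epsilon>/2 * real n" using dK by (simp add: mult.assoc[symmetric])
        moreover have "0 \<le> \<delta> * real n" using d0 by simp
        ultimately have "\<epsilon> * real n \<le> 4 * real n1 * B" by linarith
        then show False using nbig' by linarith
      qed
      have "f z n / real n \<le> a + \<epsilon>" using up npos by (simp add: divide_le_eq)
      moreover have "a - \<epsilon> \<le> f z n / real n" using low npos by (simp add: le_divide_eq)
      ultimately show "\<bar>f z n / real n - a\<bar> \<le> \<epsilon>" by linarith
    qed
  qed
qed



lemma badly:
  fixes C :: real
  assumes A: "0 < \<alpha>" "\<alpha> < 1" "\<alpha> \<notin> \<rat>" "\<forall>n\<ge>1. \<bar>cf_digit \<alpha> n\<bar> \<le> C"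
  shows "\<exists>c>0. c \<le> 1/2 \<and> (\<forall>q p. 0 < q \<longrightarrow> c / real_of_int q \<le> \<bar>of_int q * \<alpha> - of_int p\<bar>)"
proof -
  have C1: "1 \<le> C" by (rule gauss_step(11)[OF A])
  define c where "c = 1 / (2*(C+1)^2)"
  have c0: "0 < c" using C1 unfolding c_def by simp
  have "1 \<le> (C+1)^2" using C1 by (simp add: one_le_power)
  then have "1 / (C+1)^2 \<le> 1" by (simp add: divide_le_eq_1)
  then have ch: "c \<le> 1/2" unfolding c_def by simp
  have main: "c / real_of_int q \<le> \<bar>of_int q * \<alpha> - of_int p\<bar>" if q0: "0 < q" for q p :: int
  proof (cases "0 \<le> p")
    case True
    have "(1 + gauss_iter \<alpha> 0 * 0) / (2*(C+1)^2) \<le> \<bar>(real (nat q) * gauss_iter \<alpha> 0 - of_int p) * (real (nat q) + of_int p * 0)\<bar>"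
      using badly_aux[OF A, of "nat q", THEN spec[of _ 0], THEN spec[of _ 0], THEN spec[of _ p]] q0 True by simp
    moreover have "real (nat q) = of_int q" using q0 by simp
    ultimately have "c \<le> \<bar>of_int q * \<alpha> - of_int p\<bar> * of_int q" unfolding c_def using q0 by (simp add: abs_mult)
    then show ?thesis using q0 by (simp add: divide_le_eq mult.commute)
  next
    case False
    have "0 < of_int q * \<alpha>" using q0 A(1) by simp
    moreover have "of_int p \<le> (-1::real)" using False by simp
    ultimately have "1 \<le> of_int q * \<alpha> - of_int p" by linarith
    moreover have "c / real_of_int q \<le> c" using q0 c0 by (simp add: divide_le_eq)
    ultimately show ?thesis using ch by linarith
  qed
  show ?thesis using c0 ch main by blast
qed

definition lt :: "real \<Rightarrow> real \<Rightarrow> nat" where "lt \<alpha> z = nat (\<lfloor>z + \<alpha>\<rfloor> - \<lfloor>z\<rfloor>)"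
definition wd :: "real \<Rightarrow> real \<Rightarrow> nat \<Rightarrow> nat list" where
  "wd \<alpha> z n = map (\<lambda>i. lt \<alpha> (z + real i * \<alpha>)) [0..<n]"

lemma length_wd[simp]: "length (wd \<alpha> z n) = n" by (simp add: wd_def)
lemma nth_wd[simp]: "i < n \<Longrightarrow> wd \<alpha> z n ! i = lt \<alpha> (z + real i * \<alpha>)" by (simp add: wd_def)

lemma lt_01:
  assumes "0 < \<alpha>" "\<alpha> < 1" shows "lt \<alpha> z = 0 \<or> lt \<alpha> z = 1"
proof -
  have "\<lfloor>z\<rfloor> \<le> \<lfloor>z + \<alpha>\<rfloor>" using assms by (intro floor_mono) simp
  moreover have "\<lfloor>z + \<alpha>\<rfloor> \<le> \<lfloor>z + 1\<rfloor>" using assms by (intro floor_mono) simp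
  ultimately show ?thesis unfolding lt_def by (simp add: nat_eq_iff) linarith
qed

lemma lt_shift: "lt \<alpha> (w + of_int m) = lt \<alpha> w"
proof -
  have "\<lfloor>w + of_int m + \<alpha>\<rfloor> = \<lfloor>w + \<alpha>\<rfloor> + m"
    by (metis add.commute add.left_commute floor_add_int)
  moreover have "\<lfloor>w + of_int m\<rfloor> = \<lfloor>w\<rfloor> + m" by simp
  ultimately show ?thesis unfolding lt_def by simp
qed

lemma wd_shift_int: "wd \<alpha> (z + of_int m) n = wd \<alpha> z n"
  unfolding wd_def using lt_shift[of \<alpha> "z + real _ * \<alpha>" m]
  by (simp add: algebra_simps)

lemma sturm_lt:
  assumes "0 < \<alpha>" "\<alpha> < 1" shows "sturm \<alpha> \<theta> k = lt \<alpha> (of_int k * \<alpha> + \<theta>)"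
proof -
  define t where "t = of_int k * \<alpha> + \<theta>"
  have ft: "0 \<le> frac t" "frac t < 1" by (auto simp: frac_lt_1)
  have e: "t + \<alpha> = (frac t + \<alpha>) + of_int \<lfloor>t\<rfloor>" by (simp add: frac_def)
  have fl: "\<lfloor>t + \<alpha>\<rfloor> = \<lfloor>frac t + \<alpha>\<rfloor> + \<lfloor>t\<rfloor>" unfolding e by simp
  show ?thesis
  proof (cases "1 - \<alpha> \<le> frac t")
    case True
    have "\<lfloor>frac t + \<alpha>\<rfloor> = 1" using True ft assms by (simp add: floor_eq_iff)
    then show ?thesis using True ft unfolding sturm_def lt_def t_def[symmetric] fl by simp
  next
    case False
    have "\<lfloor>frac t + \<alpha>\<rfloor> = 0" using False ft assms by (simp add: floor_eq_iff)
    then show ?thesis using False ft unfolding sturm_def lt_def t_def[symmetric] fl by simp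
  qed
qed

lemma W_char:
  assumes "0 < \<alpha>" "\<alpha> < 1"
  shows "w \<in> sturm_words \<alpha> \<longleftrightarrow> (\<exists>z n. 1 \<le> n \<and> w = wd \<alpha> z n)"
proof
  assume "w \<in> sturm_words \<alpha>"
  then obtain \<theta> k where w: "w \<noteq> []" "w = map (\<lambda>i. sturm \<alpha> \<theta> (k + int i)) [0..<length w]"
    unfolding sturm_words_def by blast
  have "w = wd \<alpha> (of_int k * \<alpha> + \<theta>) (length w)"
    apply (subst w(2))
    unfolding wd_def using sturm_lt[OF assms] by (simp add: algebra_simps)
  moreover have "1 \<le> length w" using w(1) by (cases w) auto
  ultimately show "\<exists>z n. 1 \<le> n \<and> w = wd \<alpha> z n" by blast
next
  assume "\<exists>z n. 1 \<le> n \<and> w = wd \<alpha> z n"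
  then obtain z n where zn: "1 \<le> n" "w = wd \<alpha> z n" by blast
  have "wd \<alpha> z n = wd \<alpha> (frac z + of_int \<lfloor>z\<rfloor>) n" by (simp add: frac_def)
  also have "\<dots> = wd \<alpha> (frac z) n" by (rule wd_shift_int)
  finally have wz: "w = wd \<alpha> (frac z) n" using zn by simp
  have "w = map (\<lambda>i. sturm \<alpha> (frac z) (0 + int i)) [0..<length w]"
    unfolding wz wd_def using sturm_lt[OF assms] by (simp add: algebra_simps)
  moreover have "w \<noteq> []" using zn by (auto simp: wd_def)
  moreover have "frac z \<in> {0..<1}" by (simp add: frac_lt_1)
  ultimately show "w \<in> sturm_words \<alpha>" unfolding sturm_words_def by blast
qed

lemma wd_add: "wd \<alpha> z (n1+n2) = wd \<alpha> z n1 @ wd \<alpha> (z + real n1 * \<alpha>) n2"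
  by (rule nth_equalityI) (auto simp: nth_append algebra_simps of_nat_diff)



lemma wd_floor_eq:
  assumes "\<forall>i\<le>n. \<lfloor>z' + real i * \<alpha>\<rfloor> = \<lfloor>z + real i * \<alpha>\<rfloor>"
  shows "wd \<alpha> z' n = wd \<alpha> z n"
proof (rule nth_equalityI)
  fix i assume "i < length (wd \<alpha> z' n)"
  then have i: "i < n" by simp
  have e1: "z' + real i * \<alpha> + \<alpha> = z' + real (Suc i) * \<alpha>" by (simp add: algebra_simps)
  have e2: "z + real i * \<alpha> + \<alpha> = z + real (Suc i) * \<alpha>" by (simp add: algebra_simps)
  have a0: "\<lfloor>z' + real i * \<alpha>\<rfloor> = \<lfloor>z + real i * \<alpha>\<rfloor>" using assms i by simp
  have a1: "\<lfloor>z' + real (Suc i) * \<alpha>\<rfloor> = \<lfloor>z + real (Suc i) * \<alpha>\<rfloor>" using assms i Suc_leI by blast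
  show "wd \<alpha> z' n ! i = wd \<alpha> z n ! i"
    unfolding nth_wd[OF i] lt_def e1 e2 by (simp only: a0 a1)
qed simp

lemma window:
  assumes \<alpha>0: "0 < \<alpha>" and \<alpha>1: "\<alpha> < 1" and c0: "0 < c" and ch: "c \<le> 1/2"
    and bad: "\<forall>q p. 0 < q \<longrightarrow> c / real_of_int q \<le> \<bar>of_int q * \<alpha> - of_int p\<bar>"
    and n1: "1 \<le> n"
  shows "\<exists>b. \<forall>z'. b < z' \<and> z' < b + c/(2*real n) \<longrightarrow> wd \<alpha> z' n = wd \<alpha> z0 n"
proof -
  define \<delta> where "\<delta> = c/(2*real n)"
  have d0: "0 < \<delta>" using c0 n1 by (simp add: \<delta>_def)
  have d1: "2*\<delta> < 1"
  proof -
    have "c * 1 \<le> c * real n" using c0 n1 by (intro mult_left_mono) auto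
    then have "c / real n \<le> c" using n1 by (simp add: divide_le_eq)
    then have "\<delta> \<le> c/2" unfolding \<delta>_def by simp
    then show ?thesis using ch by linarith
  qed
  have dn: "2*\<delta> = c / real n" using n1 by (simp add: \<delta>_def)
  show ?thesis
  proof (cases "\<exists>i\<le>n. \<exists>N::int. z0 + real i*\<alpha> < N \<and> N < z0 + real i*\<alpha> + \<delta>")
    case False
    show ?thesis unfolding \<delta>_def[symmetric]
    proof (rule exI[of _ z0], intro allI impI)
      fix z' assume z': "z0 < z' \<and> z' < z0 + \<delta>"
      show "wd \<alpha> z' n = wd \<alpha> z0 n"
      proof (rule wd_floor_eq, intro allI impI)
        fix i assume i: "i \<le> n"
        define N where "N = \<lfloor>z' + real i * \<alpha>\<rfloor>"
        have m: "\<lfloor>z0 + real i * \<alpha>\<rfloor> \<le> N" unfolding N_def using z' by (intro floor_mono) simp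
        have u: "of_int N < z0 + real i * \<alpha> + \<delta>"
        proof -
          have "of_int N \<le> z' + real i * \<alpha>" unfolding N_def by simp
          then show ?thesis using z' by linarith
        qed
        show "N = \<lfloor>z0 + real i * \<alpha>\<rfloor>"
        proof (rule ccontr)
          assume "N \<noteq> \<lfloor>z0 + real i * \<alpha>\<rfloor>"
          then have "\<lfloor>z0 + real i * \<alpha>\<rfloor> < N" using m by simp
          then have "z0 + real i * \<alpha> < of_int N" by (simp add: floor_less_iff)
          then show False using False i u by blast
        qed
      qed
    qed
  next
    case True
    then obtain i1 N1 where i1: "i1 \<le> n" and N1: "z0 + real i1*\<alpha> < of_int N1" "of_int N1 < z0 + real i1*\<alpha> + \<delta>"
      by blast
    show ?thesis unfolding \<delta>_def[symmetric]
    proof (rule exI[of _ "z0 - \<delta>"], intro allI impI)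
      fix z' assume z': "z0 - \<delta> < z' \<and> z' < z0 - \<delta> + \<delta>"
      show "wd \<alpha> z' n = wd \<alpha> z0 n"
      proof (rule wd_floor_eq, intro allI impI)
        fix i assume i: "i \<le> n"
        define N2 where "N2 = \<lfloor>z0 + real i * \<alpha>\<rfloor>"
        have m: "\<lfloor>z' + real i * \<alpha>\<rfloor> \<le> N2" unfolding N2_def using z' by (intro floor_mono) simp
        show "\<lfloor>z' + real i * \<alpha>\<rfloor> = N2"
        proof (rule ccontr)
          assume "\<lfloor>z' + real i * \<alpha>\<rfloor> \<noteq> N2"
          then have "\<lfloor>z' + real i * \<alpha>\<rfloor> < N2" using m by simp
          then have "z' + real i * \<alpha> < of_int N2" by (simp add: floor_less_iff)
          then have N2a: "z0 + real i * \<alpha> - \<delta> < of_int N2" using z' by linarith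
          have N2b: "of_int N2 \<le> z0 + real i * \<alpha>" unfolding N2_def by simp
          define D where "D = of_int (N1 - N2) - (real i1 - real i) * \<alpha>"
          have D: "0 < D" "D < 2*\<delta>" using N1 N2a N2b unfolding D_def by (simp_all add: algebra_simps)
          consider "i1 = i" | "i < i1" | "i1 < i" by linarith
          then show False
          proof cases
            case 1
            then have "0 < N1 - N2" "N1 - N2 < 1" using D d1 unfolding D_def by simp_all
            then show False by simp
          next
            case 2
            define q where "q = int i1 - int i"
            have q0: "0 < q" using 2 by (simp add: q_def)
            have qn: "real_of_int q \<le> real n" using i1 2 by (simp add: q_def)
            have "c / real n \<le> c / real_of_int q" using q0 qn c0 by (intro divide_left_mono) auto
            also have "\<dots> \<le> \<bar>of_int q * \<alpha> - of_int (N1 - N2)\<bar>" using bad q0 by blast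
            also have "of_int q * \<alpha> - of_int (N1 - N2) = - D" unfolding D_def q_def by (simp add: algebra_simps)
            finally show False using D dn by simp
          next
            case 3
            define q where "q = int i - int i1"
            have q0: "0 < q" using 3 by (simp add: q_def)
            have qn: "real_of_int q \<le> real n" using i 3 by (simp add: q_def)
            have "c / real n \<le> c / real_of_int q" using q0 qn c0 by (intro divide_left_mono) auto
            also have "\<dots> \<le> \<bar>of_int q * \<alpha> - of_int (N2 - N1)\<bar>" using bad q0 by blast
            also have "of_int q * \<alpha> - of_int (N2 - N1) = D" unfolding D_def q_def by (simp add: algebra_simps)
            finally show False using D dn by simp
          qed
        qed
      qed
    qed
  qed
qed



lemma lin2: "\<bar>a::real\<bar> < d/8 \<Longrightarrow> \<bar>b\<bar> < d/8 \<Longrightarrow> \<bar>a + b\<bar> < d/4"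
  unfolding abs_less_iff by linarith

lemma density:
  assumes \<alpha>0: "0 < \<alpha>" and \<alpha>1: "\<alpha> < 1" and c0: "0 < c" and ch: "c \<le> 1/2"
    and bad: "\<forall>q p. 0 < q \<longrightarrow> c / real_of_int q \<le> \<bar>of_int q * \<alpha> - of_int p\<bar>"
    and d0: "0 < \<delta>" and d1: "\<delta> \<le> 1"
  shows "\<exists>j::nat. real j \<le> 4/(c*\<delta>) + 1 \<and> (\<exists>N::int. b < x + real j*\<alpha> - N \<and> x + real j*\<alpha> - N < b + \<delta>)"
proof -
  define M where "M = nat \<lceil>4/(c*\<delta>)\<rceil>"
  have cd0: "0 < c*\<delta>" using c0 d0 by simp
  have Mge: "4/(c*\<delta>) \<le> real M" unfolding M_def by linarith
  have cp: "0 < 4/(c*\<delta>)" using cd0 by simp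
  have "real M = of_int \<lceil>4/(c*\<delta>)\<rceil>" unfolding M_def using cp by simp
  then have Mle: "real M \<le> 4/(c*\<delta>) + 1" using of_int_ceiling_le_add_one[of "4/(c*\<delta>)"] by linarith
  have Mpos: "0 < M" using Mge cd0
    by (metis divide_pos_pos less_le_trans of_nat_0_less_iff zero_less_numeral)
  obtain h k where hk: "coprime h k" "0 < k" "k \<le> int M" "\<bar>of_int k * \<alpha> - of_int h\<bar> < 1/M"
    using Dirichlet_approx_coprime[OF Mpos, of \<alpha>] by blast
  define s where "s = of_int k * \<alpha> - of_int h"
  have kpos: "0 < real_of_int k" using hk by simp
  have Mr: "0 < real M" using Mpos by simp
  have "c / real_of_int k \<le> \<bar>s\<bar>" using bad hk(2) unfolding s_def by blast
  then have "c / real_of_int k < 1 / real M" using hk(4) unfolding s_def by linarith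
  then have ckM: "c * real M < real_of_int k" using kpos Mr by (simp add: field_simps)
  have "c * (4/(c*\<delta>)) \<le> c * real M" using Mge c0 by (intro mult_left_mono) auto
  moreover have "c * (4/(c*\<delta>)) = 4/\<delta>" using c0 by simp
  ultimately have k4: "4/\<delta> < real_of_int k" using ckM by linarith
  then have ik: "1 / real_of_int k < \<delta>/4" using d0 kpos by (simp add: field_simps)
  have pp: "0 < real M * (4/(c*\<delta>))" using Mr cp by (rule mult_pos_pos)
  have "1 / real M \<le> 1 / (4/(c*\<delta>))" by (rule divide_left_mono[OF Mge _ pp]) simp
  also have "\<dots> = c*\<delta>/4" by simp
  also have "\<dots> \<le> \<delta>/8" using ch d0 by (simp add: field_simps)
  finally have sM: "\<bar>s\<bar> < \<delta>/8" using hk(4) unfolding s_def by linarith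
  define t where "t = b + \<delta>/2"
  define y where "y = t - x"
  define r where "r = \<lfloor>of_int k * y + 1/2\<rfloor>"
  have r1: "of_int r \<le> of_int k * y + 1/2" unfolding r_def by simp
  have r2: "of_int k * y - 1/2 < of_int r" unfolding r_def by linarith
  obtain u v where uv: "u * h + v * k = 1"
    using bezout_int[of h k] hk(1) by (auto simp: coprime_iff_gcd_eq_1)
  define j0 where "j0 = (r*u) mod k"
  define d where "d = (r*u) div k"
  have j0d: "j0 = r*u - d*k" unfolding j0_def d_def using minus_div_mult_eq_mod[of "r*u" k] by simp
  have j0r: "0 \<le> j0" "j0 < k" unfolding j0_def using hk(2) by simp_all
  define N0 where "N0 = (- r) * v - d * h"
  have jh: "j0 * h = r + k * N0"
  proof -
    have "j0 * h = r * (u*h) - d*k*h" unfolding j0d by (simp add: algebra_simps)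
    also have "\<dots> = r * (1 - v * k) - d*k*h"
    proof -
      have uh: "u*h = 1 - v * k" using uv by simp
      show ?thesis unfolding uh by (rule refl)
    qed
    also have "\<dots> = r + k * N0" unfolding N0_def by (simp add: algebra_simps)
    finally show ?thesis .
  qed
  define j where "j = nat j0"
  have jj: "real j = of_int j0" unfolding j_def using j0r by simp
  have ja: "real j * \<alpha> = of_int r / of_int k + of_int N0 + real j * s / of_int k"
  proof -
    have "real j * \<alpha> = real j * (of_int h + s) / of_int k" unfolding s_def using kpos by simp
    also have "\<dots> = (of_int (j0*h) + real j * s) / of_int k" unfolding jj by (simp add: algebra_simps)
    also have "\<dots> = (of_int r + of_int k * of_int N0 + real j * s) / of_int k" unfolding jh by simp
    also have "\<dots> = of_int r / of_int k + of_int N0 + real j * s / of_int k" using kpos by (simp add: field_simps)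
    finally show ?thesis .
  qed
  have e: "x + real j * \<alpha> - of_int N0 - t = (of_int r / of_int k - y) + real j * s / of_int k"
    unfolding ja y_def by simp
  have "\<bar>of_int r / of_int k - y\<bar> = \<bar>of_int r - of_int k * y\<bar> / of_int k" using kpos
    by (simp add: field_simps abs_div_pos[symmetric])
  also have "\<dots> \<le> (1/2) / of_int k"
  proof -
    have ab: "\<bar>of_int r - of_int k * y\<bar> \<le> 1/2" using r1 r2 unfolding abs_le_iff by linarith
    show ?thesis by (rule divide_right_mono[OF ab]) (use kpos in simp)
  qed
  also have "\<dots> < \<delta>/8" using ik by simp
  finally have E1: "\<bar>of_int r / of_int k - y\<bar> < \<delta>/8" .
  have "\<bar>real j * s / of_int k\<bar> = (real j / of_int k) * \<bar>s\<bar>" using kpos by (simp add: abs_mult)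
  also have "\<dots> \<le> 1 * \<bar>s\<bar>" using jj j0r kpos by (intro mult_right_mono) auto
  finally have "\<bar>real j * s / of_int k\<bar> \<le> 1 * \<bar>s\<bar>" .
  then have E2: "\<bar>real j * s / of_int k\<bar> < \<delta>/8" using sM by linarith
  have "\<bar>x + real j * \<alpha> - of_int N0 - t\<bar> < \<delta>/4" unfolding e by (rule lin2[OF E1 E2])
  then have P: "b < x + real j*\<alpha> - of_int N0 \<and> x + real j*\<alpha> - of_int N0 < b + \<delta>" unfolding t_def by linarith
  have "real j < real M" using jj j0r hk(3) by linarith
  then have "real j \<le> 4/(c*\<delta>) + 1" using Mle by linarith
  then show ?thesis using P by blast
qed



lemma linrec:
  assumes \<alpha>0: "0 < \<alpha>" and \<alpha>1: "\<alpha> < 1" and c0: "0 < c" and ch: "c \<le> 1/2"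
    and bad: "\<forall>q p. 0 < q \<longrightarrow> c / real_of_int q \<le> \<bar>of_int q * \<alpha> - of_int p\<bar>"
    and n1: "1 \<le> n"
  shows "\<exists>j. j + n \<le> (nat \<lceil>8/c^2\<rceil> + 2) * n \<and> wd \<alpha> (z + real j * \<alpha>) n = wd \<alpha> z0 n"
proof -
  obtain b where b: "\<forall>z'. b < z' \<and> z' < b + c/(2*real n) \<longrightarrow> wd \<alpha> z' n = wd \<alpha> z0 n"
    using window[OF \<alpha>0 \<alpha>1 c0 ch bad n1] by blast
  define \<delta> where "\<delta> = c/(2*real n)"
  have nr: "1 \<le> real n" using n1 by simp
  have d0: "0 < \<delta>" using c0 nr by (simp add: \<delta>_def)
  have d1: "\<delta> \<le> 1"
  proof -
    have "c \<le> 2 * real n" using ch nr by linarith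
    then show ?thesis unfolding \<delta>_def using nr by (simp add: divide_le_eq)
  qed
  obtain j N where j: "real j \<le> 4/(c*\<delta>) + 1" and N: "b < z + real j*\<alpha> - of_int N" "z + real j*\<alpha> - of_int N < b + \<delta>"
    using density[OF \<alpha>0 \<alpha>1 c0 ch bad d0 d1, of b z] by blast
  have "wd \<alpha> (z + real j * \<alpha>) n = wd \<alpha> ((z + real j*\<alpha> - of_int N) + of_int N) n" by simp
  also have "\<dots> = wd \<alpha> (z + real j*\<alpha> - of_int N) n" by (rule wd_shift_int)
  also have "\<dots> = wd \<alpha> z0 n" using b N unfolding \<delta>_def by blast
  finally have W: "wd \<alpha> (z + real j * \<alpha>) n = wd \<alpha> z0 n" .
  have e4: "4/(c*\<delta>) = 8/c^2 * real n" unfolding \<delta>_def using c0 nr by (simp add: field_simps power2_eq_square)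
  have "real (j + n) \<le> 8/c^2 * real n + 1 + real n" using j e4 by simp
  also have "\<dots> \<le> 8/c^2 * real n + 2 * real n" using nr by simp
  also have "\<dots> = (8/c^2 + 2) * real n" by (simp add: algebra_simps)
  also have "\<dots> \<le> real (nat \<lceil>8/c^2\<rceil> + 2) * real n"
  proof -
    have "8/c^2 \<le> real (nat \<lceil>8/c^2\<rceil>)" by linarith
    then show ?thesis using nr by (intro mult_right_mono) auto
  qed
  also have "\<dots> = real ((nat \<lceil>8/c^2\<rceil> + 2) * n)" by (simp only: of_nat_mult)
  finally have "j + n \<le> (nat \<lceil>8/c^2\<rceil> + 2) * n" by (simp only: of_nat_le_iff)
  then show ?thesis using W by blast
qed

theorem lemma4:
  fixes \<alpha> :: real and C :: real and F :: "nat list \<Rightarrow> real"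
  assumes "0 < \<alpha>" and "\<alpha> < 1" and "\<alpha> \<notin> \<rat>"
    and "\<forall>n\<ge>1. \<bar>cf_digit \<alpha> n\<bar> \<le> C"
    and "\<forall>w\<in>sturm_words \<alpha>. F w \<ge> 0"
    and "subadditive_on (sturm_words \<alpha>) F"
  shows "\<exists>L. word_limit (sturm_words \<alpha>) (\<lambda>w. F w / real (length w)) L"
proof -
  note A = assms(1-4)
  obtain c where c0: "0 < c" and ch: "c \<le> 1/2"
    and bad: "\<forall>q p. 0 < q \<longrightarrow> c / real_of_int q \<le> \<bar>of_int q * \<alpha> - of_int p\<bar>"
    using badly[OF A] by blast
  define K where "K = nat \<lceil>8/c^2\<rceil> + 2"
  define f where "f z n = (if n = 0 then 0 else F (wd \<alpha> z n))" for z n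
  define \<sigma> where "\<sigma> z j = z + real j * \<alpha>" for z j
  define B where "B = \<bar>F [0]\<bar> + \<bar>F [1]\<bar>"
  have inW: "wd \<alpha> z n \<in> sturm_words \<alpha>" if "1 \<le> n" for z n
    using W_char[OF assms(1,2)] that by blast
  have f1: "f z 1 \<le> B" for z
  proof -
    have w1: "wd \<alpha> z 1 = [lt \<alpha> z]" by (simp add: wd_def)
    show ?thesis using lt_01[OF assms(1,2), of z] unfolding f_def w1 B_def by auto
  qed
  have P1a: "0 \<le> f z n" for z n using assms(5) inW unfolding f_def by simp
  have P2: "f z (n1+n2) \<le> f z n1 + f (\<sigma> z n1) n2" for z n1 n2
  proof (cases "n1 = 0 \<or> n2 = 0")
    case True
    then show ?thesis unfolding f_def \<sigma>_def by auto
  next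
    case False
    then have n: "1 \<le> n1" "1 \<le> n2" "1 \<le> n1 + n2" by auto
    have "F (wd \<alpha> z n1 @ wd \<alpha> (\<sigma> z n1) n2) \<le> F (wd \<alpha> z n1) + F (wd \<alpha> (\<sigma> z n1) n2)"
      using assms(6) inW[OF n(1)] inW[OF n(2)] inW[OF n(3), of z]
      unfolding subadditive_on_def wd_add \<sigma>_def by blast
    then show ?thesis using False unfolding f_def wd_add[symmetric] \<sigma>_def by simp
  qed
  have P1b: "f z n \<le> B * real n" for z n
  proof (induction n arbitrary: z)
    case 0 then show ?case by (simp add: f_def)
  next
    case (Suc n)
    have "f z (1 + n) \<le> f z 1 + f (\<sigma> z 1) n" by (rule P2)
    also have "\<dots> \<le> B + B * real n" using f1 Suc.IH by (intro add_mono)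
    finally show ?case by (simp add: algebra_simps)
  qed
  have P3: "\<exists>j. j + n \<le> K * n \<and> f (\<sigma> z j) n = f z0 n" if "1 \<le> n" for z z0 n
    using linrec[OF assms(1,2) c0 ch bad that, of z z0] unfolding K_def f_def \<sigma>_def by auto
  obtain a where a: "\<forall>\<epsilon>>0. \<exists>N0. \<forall>z n. N0 \<le> n \<longrightarrow> \<bar>f z n / real n - a\<bar> \<le> \<epsilon>"
    using abstract_ergodic[of f B \<sigma> K, OF P1a P1b P2 P3] by blast
  show ?thesis unfolding word_limit_def
  proof (rule exI[of _ a], intro allI impI)
    fix \<epsilon> :: real assume e0: "0 < \<epsilon>"
    obtain N0 where N0: "\<forall>z n. N0 \<le> n \<longrightarrow> \<bar>f z n / real n - a\<bar> \<le> \<epsilon>" using a e0 by blast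
    show "\<exists>n\<^sub>\<epsilon>. \<forall>w\<in>sturm_words \<alpha>. n\<^sub>\<epsilon> \<le> length w \<longrightarrow> \<bar>F w / real (length w) - a\<bar> \<le> \<epsilon>"
    proof (rule exI[of _ N0], intro ballI impI)
      fix w assume w: "w \<in> sturm_words \<alpha>" and l: "N0 \<le> length w"
      obtain z n where zn: "1 \<le> n" "w = wd \<alpha> z n" using W_char[OF assms(1,2)] w by blast
      have "F w = f z n" using zn unfolding f_def by simp
      moreover have "length w = n" using zn by simp
      ultimately show "\<bar>F w / real (length w) - a\<bar> \<le> \<epsilon>" using N0 l by simp
    qed
  qed
qed

end
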